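(* Suppose that a connected graph $H$ contains the star $K_{1,4}$ as a subgraph but does not contain any subgraph isomorphic to $S_{4,4}$. Then $H$ contains a vertex of degree more than $(v(H)/2)^{1/7}$.
   Context: Graphs are finite simple graphs; $v(H)$ is the number of vertices of $H$. The sparkler graph $S_{4,4}$ is obtained from the star $K_{1,3}$ and the path $P_4$ on 4 vertices by adding an edge between an end vertex of $P_4$ and the central vertex of $K_{1,3}$. *)

theory Defs
  imports Complex_Main
begin

definition simple_graph :: "'a set \<Rightarrow> ('a \<Rightarrow> 'a \<Rightarrow> bool) \<Rightarrow> bool" where
  "simple_graph V E \<longleftrightarrow> finite V \<and> (\<forall>x y. E x y \<longrightarrow> x \<in> V \<and> y \<in> V)
     \<and> (\<forall>x y. E x y \<longrightarrow> E y x) \<and> (\<forall>x. \<not> E x x)"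

definition connected_graph :: "'a set \<Rightarrow> ('a \<Rightarrow> 'a \<Rightarrow> bool) \<Rightarrow> bool" where
  "connected_graph V E \<longleftrightarrow> V \<noteq> {} \<and> (\<forall>x\<in>V. \<forall>y\<in>V. E\<^sup>*\<^sup>* x y)"

definition degree :: "'a set \<Rightarrow> ('a \<Rightarrow> 'a \<Rightarrow> bool) \<Rightarrow> 'a \<Rightarrow> nat" where
  "degree V E v = card {u \<in> V. E v u}"

definition contains_subgraph ::
  "'b set \<Rightarrow> ('b \<Rightarrow> 'b \<Rightarrow> bool) \<Rightarrow> 'a set \<Rightarrow> ('a \<Rightarrow> 'a \<Rightarrow> bool) \<Rightarrow> bool" where
  "contains_subgraph VP EP V E \<longleftrightarrow>
     (\<exists>f. inj_on f VP \<and> f ` VP \<subseteq> V \<and> (\<forall>x\<in>VP. \<forall>y\<in>VP. EP x y \<longrightarrow> E (f x) (f y)))"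

definition star14_V :: "nat set" where "star14_V = {0..4}"
definition star14_E :: "nat \<Rightarrow> nat \<Rightarrow> bool" where
  "star14_E x y \<longleftrightarrow> x \<in> star14_V \<and> y \<in> star14_V \<and>
     ((x = 0 \<and> y \<noteq> 0) \<or> (y = 0 \<and> x \<noteq> 0))"

text \<open>Sparkler S_{4,4}: star K_{1,3} with centre 0 and leaves 1,2,3; path P_4 = 4-5-6-7;
  extra edge between the path end 4 and the centre 0.\<close>
definition sparkler44_V :: "nat set" where "sparkler44_V = {0..7}"
definition sparkler44_edges :: "(nat \<times> nat) set" where
  "sparkler44_edges = {(0,1),(0,2),(0,3),(0,4),(4,5),(5,6),(6,7)}"
definition sparkler44_E :: "nat \<Rightarrow> nat \<Rightarrow> bool" where
  "sparkler44_E x y \<longleftrightarrow> (x,y) \<in> sparkler44_edges \<or> (y,x) \<in> sparkler44_edges"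

end

theory Submission
  imports Defs
begin

fun ball :: "('a \<Rightarrow> 'a \<Rightarrow> bool) \<Rightarrow> 'a \<Rightarrow> nat \<Rightarrow> 'a set" where
  "ball E v 0 = {v}"
| "ball E v (Suc k) = ball E v k \<union> {u. \<exists>w\<in>ball E v k. E w u}"

lemma ball_escape:
  assumes "E\<^sup>*\<^sup>* v w" "w \<notin> ball E v k"
  shows "\<exists>x. x \<in> ball E v (Suc k) - ball E v k"
  using assms
proof (induction rule: rtranclp_induct)
  case base
  have "v \<in> ball E v k" by (induction k) auto
  then show ?case using base by simp
next
  case (step y z)
  show ?case
  proof (cases "y \<in> ball E v k")
    case True
    then show ?thesis using step by auto
  next
    case False
    then show ?thesis using step by auto
  qed
qed

lemma ball_back:
  assumes "x \<in> ball E v (Suc (Suc k)) - ball E v (Suc k)"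
  shows "\<exists>y. y \<in> ball E v (Suc k) - ball E v k \<and> E y x"
  using assms by auto

lemma sparkler_from:
  assumes "distinct [v,l1,l2,l3,a,b,c,d]" "set [v,l1,l2,l3,a,b,c,d] \<subseteq> V"
    "\<forall>x y. E x y \<longrightarrow> E y x"
    "E v l1" "E v l2" "E v l3" "E v a" "E a b" "E b c" "E c d"
  shows "contains_subgraph sparkler44_V sparkler44_E V E"
proof -
  let ?xs = "[v,l1,l2,l3,a,b,c,d]"
  have inj: "inj_on (nth ?xs) sparkler44_V"
    by (rule inj_on_nth[OF assms(1)]) (auto simp: sparkler44_V_def)
  have img: "nth ?xs ` sparkler44_V \<subseteq> V"
  proof
    fix z assume "z \<in> nth ?xs ` sparkler44_V"
    then obtain i where i: "i \<le> 7" "z = ?xs ! i" by (auto simp: sparkler44_V_def)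
    then have "i < length ?xs" by simp
    note i = this i
    then have "z \<in> set ?xs" by (metis nth_mem)
    then show "z \<in> V" using assms(2) by blast
  qed
  have ee: "\<And>x y. (x,y) \<in> sparkler44_edges \<Longrightarrow> E (?xs ! x) (?xs ! y)"
    unfolding sparkler44_edges_def using assms(4-) by auto
  have edges: "\<forall>x\<in>sparkler44_V. \<forall>y\<in>sparkler44_V. sparkler44_E x y \<longrightarrow> E (?xs ! x) (?xs ! y)"
    using ee assms(3) unfolding sparkler44_E_def by blast
  show ?thesis unfolding contains_subgraph_def using inj img edges by blast
qed


lemma nat_bound:
  fixes M :: nat assumes "M \<ge> 4" shows "(M+1)^3 < 2*M^7"
proof -
  have "(M+1)^3 \<le> (2*M)^3" by (rule power_mono) (use assms in auto)
  also have "\<dots> = 8*M^3" by simp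
  also have "\<dots> < 2*(M^3*M^4)"
  proof -
    have "4^4 \<le> M^4" by (rule power_mono) (use assms in auto)
    hence "256 \<le> M^4" by simp
    moreover have "M^3 > 0" using assms by simp
    have "8 \<le> M^4" using \<open>256 \<le> M^4\<close> by simp
    then have "M^3*8 \<le> M^3*M^4" by (rule mult_le_mono2)
    then show ?thesis using \<open>M^3 > 0\<close> by linarith
  qed
  also have "M^3*M^4 = M^7" by (simp flip: power_add)
  finally show ?thesis .
qed

theorem lemma3:
  fixes V :: "'a set" and E :: "'a \<Rightarrow> 'a \<Rightarrow> bool"
  assumes "simple_graph V E"
    and "connected_graph V E"
    and "contains_subgraph star14_V star14_E V E"
    and "\<not> contains_subgraph sparkler44_V sparkler44_E V E"
  shows "\<exists>v\<in>V. real (degree V E v) > (real (card V) / 2) powr (1 / 7)"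
proof -
  have finV: "finite V" and inV: "\<And>x y. E x y \<Longrightarrow> x \<in> V \<and> y \<in> V"
    and sym: "\<forall>x y. E x y \<longrightarrow> E y x"
    using assms(1) unfolding simple_graph_def by auto
  obtain f where finj: "inj_on f star14_V" and fV: "f ` star14_V \<subseteq> V"
    and fE: "\<forall>x\<in>star14_V. \<forall>y\<in>star14_V. star14_E x y \<longrightarrow> E (f x) (f y)"
    using assms(3) unfolding contains_subgraph_def by blast
  define v where "v = f 0"
  have Ev: "E v (f i)" if "i \<in> {1,2,3,4}" for i
  proof -
    have "0 \<in> star14_V" "i \<in> star14_V" "star14_E 0 i"
      using that by (auto simp: star14_E_def star14_V_def)
    then show ?thesis using fE unfolding v_def by blast
  qed
  have fne: "f i \<noteq> f j" if "i \<in> {0..4}" "j \<in> {0..4}" "i \<noteq> j" for i j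
    using finj that unfolding star14_V_def inj_on_def by blast
  have vV: "v \<in> V" using inV Ev[of 1] by auto
  define N where "N w = {u\<in>V. E w u}" for w
  define M where "M = Max (degree V E ` V)"
  have NM: "card (N w) \<le> M" for w
  proof (cases "w \<in> V")
    case True
    then show ?thesis unfolding M_def N_def degree_def
      using finV by (intro Max_ge) auto
  next
    case False
    then have "N w = {}" unfolding N_def using inV by auto
    then show ?thesis by simp
  qed
  have M4: "M \<ge> 4"
  proof -
    have "{f 1, f 2, f 3, f 4} \<subseteq> N v" unfolding N_def using Ev inV by auto
    moreover have "card {f 1, f 2, f 3, f 4} = 4" using fne by auto
    moreover have "finite (N v)" unfolding N_def using finV by auto
    ultimately have "4 \<le> card (N v)" by (metis card_mono)
    then show ?thesis using NM[of v] by simp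
  qed
  have ballV: "ball E v k \<subseteq> V" for k
    by (induction k) (use vV inV in auto)
  have finB: "finite (ball E v k)" for k using ballV finV finite_subset by blast
  have cardB: "card (ball E v k) \<le> (M+1)^k" for k
  proof (induction k)
    case 0 then show ?case by simp
  next
    case (Suc k)
    let ?B = "ball E v k"
    have eq: "{u. \<exists>w\<in>?B. E w u} = (\<Union>w\<in>?B. N w)" unfolding N_def using inV by auto
    have "card (ball E v (Suc k)) \<le> card ?B + card (\<Union>w\<in>?B. N w)"
      using card_Un_le eq by (metis ball.simps(2))
    also have "card (\<Union>w\<in>?B. N w) \<le> (\<Sum>w\<in>?B. card (N w))" by (rule card_UN_le[OF finB])
    also have "\<dots> \<le> card ?B * M" using sum_bounded_above[of ?B "\<lambda>w. card (N w)" M] NM by simp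
    finally have "card (ball E v (Suc k)) \<le> card ?B * (M+1)" by simp
    also have "\<dots> \<le> (M+1)^k * (M+1)" using Suc by (rule mult_le_mono1)
    finally show ?case by (simp add: mult.commute)
  qed
  have VB: "V \<subseteq> ball E v 3"
  proof
    fix w assume wV: "w \<in> V"
    show "w \<in> ball E v 3"
    proof (rule ccontr)
      assume nw: "w \<notin> ball E v 3"
      have "E\<^sup>*\<^sup>* v w" using assms(2) vV wV unfolding connected_graph_def by blast
      from ball_escape[OF this nw] obtain x where x: "x \<in> ball E v 4 - ball E v 3"
        by (auto simp: numeral_eq_Suc)
      from ball_back[of x E v 2] x obtain x3 where x3: "x3 \<in> ball E v 3 - ball E v 2" "E x3 x"
        by (auto simp: numeral_eq_Suc)
      from ball_back[of x3 E v 1] x3 obtain x2 where x2: "x2 \<in> ball E v 2 - ball E v 1" "E x2 x3"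
        by (auto simp: numeral_eq_Suc)
      from ball_back[of x2 E v 0] x2 obtain x1 where x1: "x1 \<in> ball E v 1 - ball E v 0" "E x1 x2"
        by (auto simp: numeral_eq_Suc)
      have Evx1: "E v x1" using x1 by simp
      have B01: "ball E v 0 \<subseteq> ball E v 1" and B12: "ball E v 1 \<subseteq> ball E v 2"
        and B23: "ball E v 2 \<subseteq> ball E v 3"
        by (auto simp: numeral_eq_Suc)
      have fB: "f i \<in> ball E v 1" if "i \<in> {1,2,3,4}" for i using Ev[OF that] by simp
      have fv: "f i \<noteq> v" if "i \<in> {1,2,3,4}" for i using fne[of i 0] that unfolding v_def by auto
      have xV: "x \<in> V" "x1 \<in> V" "x2 \<in> V" "x3 \<in> V" using inV x1 x2 x3 by auto
      have fiV: "f i \<in> V" if "i \<in> {1,2,3,4}" for i using inV Ev[OF that] by auto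
      have main: "contains_subgraph sparkler44_V sparkler44_E V E"
        if p: "p \<in> {1,2,3,4}" and q: "q \<in> {1,2,3,4}" and r: "r \<in> {1,2,3,4}"
          and pq: "p \<noteq> q" "p \<noteq> r" "q \<noteq> r" and nx: "x1 \<noteq> f p" "x1 \<noteq> f q" "x1 \<noteq> f r"
        for p q r :: nat
      proof (rule sparkler_from[of v "f p" "f q" "f r" x1 x2 x3 x V E])
        have d1: "f p \<noteq> f q" "f p \<noteq> f r" "f q \<noteq> f r" using fne p q r pq by auto
        have xs: "x1 \<noteq> v" "x2 \<noteq> v" "x3 \<noteq> v" "x \<noteq> v" "x1 \<noteq> x2" "x1 \<noteq> x3" "x1 \<noteq> x"
          "x2 \<noteq> x3" "x2 \<noteq> x" "x3 \<noteq> x"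
        proof -
          have vB: "v \<in> ball E v k" for k by (induction k) auto
          have m: "x1 \<in> ball E v 1" "x1 \<in> ball E v 2" "x1 \<in> ball E v 3"
            "x2 \<in> ball E v 2" "x2 \<in> ball E v 3" "x3 \<in> ball E v 3"
            "x1 \<notin> ball E v 0" "x2 \<notin> ball E v 1" "x3 \<notin> ball E v 2" "x \<notin> ball E v 3"
            using x1(1) x2(1) x3(1) x(1) B12 B23 by (simp_all add: subset_iff)
          show "x1 \<noteq> v" "x2 \<noteq> v" "x3 \<noteq> v" "x \<noteq> v" "x1 \<noteq> x2" "x1 \<noteq> x3" "x1 \<noteq> x"
          "x2 \<noteq> x3" "x2 \<noteq> x" "x3 \<noteq> x"
            using m vB[of 0] vB[of 1] vB[of 2] vB[of 3] by metis+
        qed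
        have fx: "f i \<noteq> x2" "f i \<noteq> x3" "f i \<noteq> x" if "i \<in> {1,2,3,4}" for i
          using fB[OF that] x x2 x3 B12 B23 by blast+
        show "distinct [v, f p, f q, f r, x1, x2, x3, x]"
          using d1 xs fx[OF p] fx[OF q] fx[OF r] fv[OF p] fv[OF q] fv[OF r] nx by (simp add: eq_commute)
        show "set [v, f p, f q, f r, x1, x2, x3, x] \<subseteq> V"
          using vV xV fiV p q r by auto
        show "\<forall>x y. E x y \<longrightarrow> E y x" by (rule sym)
        show "E v (f p)" "E v (f q)" "E v (f r)" using Ev p q r by auto
        show "E v x1" "E x1 x2" "E x2 x3" "E x3 x" using Evx1 x1 x2 x3 by auto
      qed
      have "contains_subgraph sparkler44_V sparkler44_E V E"
      proof (cases "x1 = f 1")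
        case True
        then show ?thesis using main[of 2 3 4] fne[of 1 2] fne[of 1 3] fne[of 1 4] by auto
      next
        case F1: False
        show ?thesis
        proof (cases "x1 = f 2")
          case True
          then show ?thesis using main[of 1 3 4] fne[of 2 1] fne[of 2 3] fne[of 2 4] F1 by auto
        next
          case F2: False
          show ?thesis
          proof (cases "x1 = f 3")
            case True
            then show ?thesis using main[of 1 2 4] fne[of 3 1] fne[of 3 2] fne[of 3 4] F1 F2 by auto
          next
            case False
            then show ?thesis using main[of 1 2 3] F1 F2 by auto
          qed
        qed
      qed
      then show False using assms(4) by blast
    qed
  qed
  have "card V \<le> card (ball E v 3)" using VB finB card_mono by blast
  also have "\<dots> \<le> (M+1)^3" by (rule cardB)
  also have "\<dots> < 2*M^7" by (rule nat_bound[OF M4])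
  finally have cV: "card V < 2*M^7" .
  have "V \<noteq> {}" using vV by auto
  then have "M \<in> degree V E ` V" unfolding M_def using finV by (intro Max_in) auto
  then obtain u where uV: "u \<in> V" and uM: "degree V E u = M" by auto
  have r1: "real (card V) / 2 < real M ^ 7"
  proof -
    have "real (card V) < real (2*M^7)" using cV by linarith
    then show ?thesis by simp
  qed
  have Mpos: "real M > 0" using M4 by simp
  have "(real (card V) / 2) powr (1/7) < (real M ^ 7) powr (1/7)"
    by (rule powr_less_mono2) (use r1 in auto)
  also have "(real M ^ 7) powr (1/7) = real M"
  proof -
    have "real M ^ 7 = real M powr 7" using Mpos by (simp add: powr_realpow)
    moreover have "(real M powr 7) powr (1/7) = real M powr (7*(1/7))" by (rule powr_powr)
    ultimately show ?thesis using Mpos by simp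
  qed
  finally show ?thesis using uV uM by auto
qed

end
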